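(* Let $A=A_n$ be an $n\times n$ real symmetric random matrix whose entries $(a_{ij})_{1\le i\le j\le n}$ are independent Bernoulli$(p)$, $p=p_n$, and let $\lambda_1(A)$ be its largest eigenvalue. There exist an absolute constant $c>0$ and, for each $w\in(0,1)$, an integer $m(w)$ such that: whenever $w\in(0,1)$, $n^{w-1}\le p_n\le\tfrac12$ for all $n$, and $m=m_n$ are integers with $m(w)\le m_n\le c\min(n^{w/4},\sqrt{p_nn^{1-w}})$, then $$\lim_{n\to\infty} n^2p_n\,\mathbb{E}\Bigl[\Bigl(\frac{\lambda_1(A)}{\mathbb{E}[\lambda_1(A)]}-1\Bigr)^{2m}\Bigr]=0.$$
   Context: Diagonal entries of $A$ are included and are independent Bernoulli$(p_n)$. *)

theory Defs
  imports "HOL-Probability.Probability" "Jordan_Normal_Form.Char_Poly"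
begin

definition sym_bern_mat :: "nat \<Rightarrow> (nat \<times> nat \<Rightarrow> bool) \<Rightarrow> real mat" where
  "sym_bern_mat n f = mat n n (\<lambda>(i,j). if f (min i j, max i j) then 1 else 0)"

definition entries_pmf :: "nat \<Rightarrow> real \<Rightarrow> (nat \<times> nat \<Rightarrow> bool) pmf" where
  "entries_pmf n p = Pi_pmf {(i,j). i \<le> j \<and> j < n} False (\<lambda>_. bernoulli_pmf p)"

definition lambda1 :: "real mat \<Rightarrow> real" where
  "lambda1 A = Max {k. eigenvalue A k}"

definition E_lambda1 :: "nat \<Rightarrow> real \<Rightarrow> real" where
  "E_lambda1 n p = measure_pmf.expectation (entries_pmf n p) (\<lambda>f. lambda1 (sym_bern_mat n f))"

end

theory Submission
  imports Defs
begin


definition qf :: "nat \<Rightarrow> real mat \<Rightarrow> (nat \<Rightarrow> real) \<Rightarrow> real" where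
  "qf n M x = (\<Sum>i<n. \<Sum>j<n. M $$ (i,j) * x i * x j)"
definition nrm :: "nat \<Rightarrow> (nat \<Rightarrow> real) \<Rightarrow> real" where
  "nrm n x = (\<Sum>i<n. (x i)^2)"

definition sph :: "nat \<Rightarrow> (nat \<Rightarrow> real) set" where
  "sph n = PiE UNIV (\<lambda>i. if i < n then {-1..1} else {0}) \<inter> {x. nrm n x = 1}"

lemma compact_sph: "compact (sph n)"
proof -
  have "compactin (product_topology (\<lambda>i. euclidean) UNIV) (PiE UNIV (\<lambda>i. if i < n then {-1..1::real} else {0}))"
    by (subst compactin_PiE) auto
  hence c: "compact (PiE UNIV (\<lambda>i. if i < n then {-1..1::real} else {0}))"
    by (simp add: euclidean_product_topology)
  have "continuous_on UNIV (nrm n)"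
    unfolding nrm_def by (intro continuous_intros continuous_on_product_coordinates)
  hence "closed {x. nrm n x = 1}"
    by (intro closed_Collect_eq) auto
  with c show ?thesis unfolding sph_def by (rule compact_Int_closed)
qed

lemma cont_qf: "continuous_on UNIV (qf n M)"
  unfolding qf_def by (intro continuous_intros continuous_on_product_coordinates)

lemma sph_mem: "x \<in> sph n \<longleftrightarrow> (\<forall>i. i \<ge> n \<longrightarrow> x i = 0) \<and> (\<forall>i<n. \<bar>x i\<bar> \<le> 1) \<and> nrm n x = 1"
proof
  assume "x \<in> sph n" thus "(\<forall>i. i \<ge> n \<longrightarrow> x i = 0) \<and> (\<forall>i<n. \<bar>x i\<bar> \<le> 1) \<and> nrm n x = 1"
    unfolding sph_def PiE_def Pi_def
    by (smt (verit, best) IntD1 IntD2 atLeastAtMost_iff iso_tuple_UNIV_I leD mem_Collect_eq singletonD)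
next
  assume a: "(\<forall>i. i \<ge> n \<longrightarrow> x i = 0) \<and> (\<forall>i<n. \<bar>x i\<bar> \<le> 1) \<and> nrm n x = 1"
  have "x \<in> PiE UNIV (\<lambda>i. if i < n then {-1..1} else {0})"
    unfolding PiE_def Pi_def extensional_def using a by (auto simp: abs_le_iff)
  thus "x \<in> sph n" unfolding sph_def using a by auto
qed

lemma nrm_ge: "i < n \<Longrightarrow> (x i)^2 \<le> nrm n x"
  unfolding nrm_def by (rule member_le_sum) auto

lemma nrm_nonneg: "nrm n x \<ge> 0" unfolding nrm_def by (auto intro: sum_nonneg)

lemma nrm_zero: "nrm n x = 0 \<Longrightarrow> i < n \<Longrightarrow> x i = 0"
  using nrm_ge[of i n x] by simp

lemma qf_zero: "(\<And>i. i < n \<Longrightarrow> x i = 0) \<Longrightarrow> qf n M x = 0"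
  unfolding qf_def by simp

lemma qf_scale: "qf n M (\<lambda>i. c * x i) = c^2 * qf n M x"
  unfolding qf_def power2_eq_square by (simp add: sum_distrib_left algebra_simps)

lemma nrm_scale: "nrm n (\<lambda>i. c * x i) = c^2 * nrm n x"
  unfolding nrm_def by (simp add: sum_distrib_left algebra_simps power_mult_distrib)

lemma quad_zero:
  fixes a b :: real
  assumes a: "a \<ge> 0" and h: "\<And>t. 2*t*a + t^2*b \<le> 0"
  shows "a = 0"
proof (rule ccontr)
  assume "a \<noteq> 0" hence ap: "a > 0" using a by auto
  define t where "t = a / (\<bar>b\<bar> + 1)"
  have tp: "t > 0" unfolding t_def using ap by auto
  have "t * \<bar>b\<bar> < a"
  proof -
    have "t * \<bar>b\<bar> = a * (\<bar>b\<bar> / (\<bar>b\<bar> + 1))" unfolding t_def by simp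
    also have "\<dots> < a * 1" using ap by (intro mult_strict_left_mono) auto
    finally show ?thesis by simp
  qed
  hence "t^2 * \<bar>b\<bar> < t * a" using tp by (simp add: power2_eq_square)
  moreover have "t^2 * b \<ge> - (t^2 * \<bar>b\<bar>)" by (simp add: abs_if)
  moreover have "t * a > 0" using tp ap by simp
  ultimately have "2*t*a + t^2*b > 0" by linarith
  with h[of t] show False by simp
qed

lemma max_eig:
  fixes M :: "real mat"
  assumes M: "M \<in> carrier_mat n n" and sym: "\<And>i j. i < n \<Longrightarrow> j < n \<Longrightarrow> M $$ (i,j) = M $$ (j,i)"
    and n: "n > 0"
  shows "\<exists>k. eigenvalue M k \<and> (\<Sum>i<n. \<Sum>j<n. M $$ (i,j)) / n \<le> k"
proof -
  define u where "u = (\<lambda>i. if i < n then 1 / sqrt n else 0::real)"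
  have "nrm n u = (\<Sum>i<n. (1/sqrt n)^2)" unfolding nrm_def u_def by (intro sum.cong) auto
  hence nu: "nrm n u = 1" using n by (simp add: power_divide)
  have u1: "\<forall>i. i \<ge> n \<longrightarrow> u i = 0" by (simp add: u_def)
  have "1 / sqrt (real n) \<le> 1" using n by (simp add: divide_le_eq)
  hence u2: "\<forall>i<n. \<bar>u i\<bar> \<le> 1" unfolding u_def by simp
  have "u \<in> sph n" unfolding sph_mem using u1 u2 nu by blast
  hence ne: "sph n \<noteq> {}" by auto
  obtain x where xs: "x \<in> sph n" and xmax: "\<And>y. y \<in> sph n \<Longrightarrow> qf n M y \<le> qf n M x"
    using continuous_attains_sup[OF compact_sph ne continuous_on_subset[OF cont_qf]] by blast
  define \<nu> where "\<nu> = qf n M x"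
  have x0: "\<And>i. i \<ge> n \<Longrightarrow> x i = 0" and nx: "nrm n x = 1" using xs unfolding sph_mem by auto
  have bound: "qf n M y \<le> \<nu> * nrm n y" if y0: "\<And>i. i \<ge> n \<Longrightarrow> y i = 0" for y
  proof (cases "nrm n y = 0")
    case True
    hence "qf n M y = 0" by (intro qf_zero) (auto intro: nrm_zero)
    thus ?thesis using True by simp
  next
    case False
    hence np: "nrm n y > 0" using nrm_nonneg[of n y] by auto
    define s where "s = sqrt (nrm n y)"
    have sp: "s > 0" unfolding s_def using np by auto
    have s2: "s^2 = nrm n y" unfolding s_def using np by simp
    define z where "z = (\<lambda>i. (1/s) * y i)"
    have nz: "nrm n z = 1" unfolding z_def nrm_scale using sp s2 np by (simp add: power_divide)
    have "z \<in> sph n" unfolding sph_mem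
    proof (intro conjI allI impI nz)
      fix i assume "i < n"
      hence "(z i)^2 \<le> 1" using nrm_ge[of i n z] nz by simp
      thus "\<bar>z i\<bar> \<le> 1" by (simp add: abs_square_le_1)
    qed (auto simp: z_def y0)
    hence "qf n M z \<le> \<nu>" using xmax unfolding \<nu>_def by auto
    hence "(1/s)^2 * qf n M y \<le> \<nu>" unfolding z_def qf_scale .
    hence "qf n M y \<le> \<nu> * s^2" using sp by (simp add: power_divide divide_le_eq mult.commute)
    thus ?thesis using s2 by simp
  qed
  define v where "v = (\<lambda>i. if i < n then (\<Sum>j<n. M $$ (i,j) * x j) - \<nu> * x i else 0)"
  define a where "a = (\<Sum>i<n. \<Sum>j<n. M $$ (i,j) * v i * x j)"
  define b where "b = qf n M v - \<nu> * nrm n v"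
  define c where "c = (\<Sum>i<n. x i * v i)"
  have swap: "(\<Sum>i<n. \<Sum>j<n. M $$ (i,j) * x i * v j) = a"
    unfolding a_def by (subst sum.swap) (intro sum.cong refl, auto simp: sym mult.commute)
  have qexp: "qf n M (\<lambda>i. x i + t * v i) = \<nu> + 2 * t * a + t^2 * qf n M v" for t
  proof -
    have "qf n M (\<lambda>i. x i + t * v i) = (\<Sum>i<n. \<Sum>j<n. M $$ (i,j) * x i * x j)
       + t * (\<Sum>i<n. \<Sum>j<n. M $$ (i,j) * v i * x j) + t * (\<Sum>i<n. \<Sum>j<n. M $$ (i,j) * x i * v j)
       + t^2 * (\<Sum>i<n. \<Sum>j<n. M $$ (i,j) * v i * v j)"
    proof -
      have pt: "M $$ (i,j) * (x i + t * v i) * (x j + t * v j) = M $$ (i,j) * x i * x j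
         + t * (M $$ (i,j) * v i * x j) + t * (M $$ (i,j) * x i * v j) + t^2 * (M $$ (i,j) * v i * v j)" for i j
        by (simp add: algebra_simps power2_eq_square)
      show ?thesis unfolding qf_def pt by (simp only: sum.distrib flip: sum_distrib_left)
    qed
    thus ?thesis unfolding swap \<nu>_def qf_def a_def by simp
  qed
  have nexp: "nrm n (\<lambda>i. x i + t * v i) = 1 + 2 * t * c + t^2 * nrm n v" for t
  proof -
    have "nrm n (\<lambda>i. x i + t * v i) = nrm n x + 2 * t * c + t^2 * nrm n v"
    proof -
      have pt: "(x i + t * v i)^2 = (x i)^2 + 2 * t * (x i * v i) + t^2 * (v i)^2" for i
        by (simp add: algebra_simps power2_eq_square)
      show ?thesis unfolding nrm_def c_def pt by (simp only: sum.distrib flip: sum_distrib_left)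
    qed
    thus ?thesis using nx by simp
  qed
  have ac: "a - \<nu> * c = nrm n v"
  proof -
    have "a - \<nu> * c = (\<Sum>i<n. v i * ((\<Sum>j<n. M $$ (i,j) * x j) - \<nu> * x i))"
      unfolding a_def c_def by (simp add: sum_distrib_left sum_subtractf algebra_simps)
    also have "\<dots> = (\<Sum>i<n. (v i)^2)"
      by (intro sum.cong refl) (auto simp: v_def power2_eq_square)
    finally show ?thesis unfolding nrm_def .
  qed
  have "2 * t * nrm n v + t^2 * b \<le> 0" for t
  proof -
    have "qf n M (\<lambda>i. x i + t * v i) \<le> \<nu> * nrm n (\<lambda>i. x i + t * v i)"
      by (rule bound) (auto simp: x0 v_def)
    hence "\<nu> + 2 * t * a + t^2 * qf n M v \<le> \<nu> * (1 + 2 * t * c + t^2 * nrm n v)"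
      unfolding qexp nexp .
    hence "2 * t * (a - \<nu> * c) + t^2 * b \<le> 0" unfolding b_def by (simp add: algebra_simps)
    thus ?thesis unfolding ac .
  qed
  hence nv: "nrm n v = 0" using quad_zero[OF nrm_nonneg] by blast
  have ev: "(\<Sum>j<n. M $$ (i,j) * x j) = \<nu> * x i" if "i < n" for i
    using nrm_zero[OF nv that] that unfolding v_def by simp
  have "eigenvector M (vec n x) \<nu>"
    unfolding eigenvector_def
  proof (intro conjI)
    show "vec n x \<in> carrier_vec (dim_row M)" using M by simp
    show "vec n x \<noteq> 0\<^sub>v (dim_row M)"
    proof
      assume "vec n x = 0\<^sub>v (dim_row M)"
      hence "\<And>i. i < n \<Longrightarrow> x i = 0" using M by (metis index_vec index_zero_vec(1) carrier_matD(1))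
      hence "nrm n x = 0" unfolding nrm_def by simp
      with nx show False by simp
    qed
    show "M *\<^sub>v vec n x = \<nu> \<cdot>\<^sub>v vec n x"
    proof (rule eq_vecI)
      fix i assume "i < dim_vec (\<nu> \<cdot>\<^sub>v vec n x)"
      hence i: "i < n" by simp
      have "(M *\<^sub>v vec n x) $ i = row M i \<bullet> vec n x" using M i by simp
      also have "\<dots> = (\<Sum>j<n. M $$ (i,j) * x j)"
        unfolding scalar_prod_def using M i by (simp add: lessThan_atLeast0)
      also have "\<dots> = \<nu> * x i" by (rule ev[OF i])
      finally show "(M *\<^sub>v vec n x) $ i = (\<nu> \<cdot>\<^sub>v vec n x) $ i" using i by simp
    qed (use M in simp)
  qed
  hence eig: "eigenvalue M \<nu>" unfolding eigenvalue_def by blast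
  have "qf n M u \<le> \<nu>" using xmax[OF \<open>u \<in> sph n\<close>] unfolding \<nu>_def .
  moreover have "qf n M u = (\<Sum>i<n. \<Sum>j<n. M $$ (i,j)) / n"
  proof -
    have "qf n M u = (\<Sum>i<n. \<Sum>j<n. M $$ (i,j) * (1/sqrt n) * (1/sqrt n))"
      unfolding qf_def u_def by (intro sum.cong refl) auto
    also have "\<dots> = (\<Sum>i<n. \<Sum>j<n. M $$ (i,j)) / n"
      using n by (simp add: sum_divide_distrib)
    finally show ?thesis .
  qed
  ultimately show ?thesis using eig by auto
qed

lemma eig_upper:
  fixes M :: "real mat"
  assumes M: "M \<in> carrier_mat n n" and nn: "\<And>i j. i < n \<Longrightarrow> j < n \<Longrightarrow> M $$ (i,j) \<ge> 0"
    and ev: "eigenvalue M k"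
  shows "\<exists>i<n. k \<le> (\<Sum>j<n. M $$ (i,j))"
proof -
  obtain v where v: "v \<in> carrier_vec n" "v \<noteq> 0\<^sub>v n" "M *\<^sub>v v = k \<cdot>\<^sub>v v"
    using ev M unfolding eigenvalue_def eigenvector_def by auto
  have "\<exists>i<n. v $ i \<noteq> 0"
  proof (rule ccontr)
    assume "\<not> ?thesis"
    hence "v = 0\<^sub>v n" using v(1) by (intro eq_vecI) auto
    with v(2) show False by simp
  qed
  hence n: "n > 0" by auto
  define S where "S = (\<lambda>j. \<bar>v $ j\<bar>) ` {..<n}"
  have fS: "finite S" "S \<noteq> {}" unfolding S_def using n by auto
  obtain i where i: "i < n" "\<bar>v $ i\<bar> = Max S" using Max_in[OF fS] unfolding S_def by auto
  have imax: "\<bar>v $ j\<bar> \<le> \<bar>v $ i\<bar>" if "j < n" for j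
    using Max_ge[OF fS(1), of "\<bar>v $ j\<bar>"] that i unfolding S_def by auto
  obtain j0 where j0: "j0 < n" "v $ j0 \<noteq> 0" using \<open>\<exists>i<n. v $ i \<noteq> 0\<close> by auto
  have vpos: "\<bar>v $ i\<bar> > 0" using imax[OF j0(1)] j0(2) by auto
  have "k * v $ i = (M *\<^sub>v v) $ i" using v(3) v(1) i by simp
  also have "\<dots> = (\<Sum>j<n. M $$ (i,j) * v $ j)"
    using M v(1) i by (simp add: scalar_prod_def lessThan_atLeast0)
  finally have kv: "k * v $ i = (\<Sum>j<n. M $$ (i,j) * v $ j)" .
  have "\<bar>k\<bar> * \<bar>v $ i\<bar> = \<bar>\<Sum>j<n. M $$ (i,j) * v $ j\<bar>" using kv by (metis abs_mult)
  also have "\<dots> \<le> (\<Sum>j<n. \<bar>M $$ (i,j) * v $ j\<bar>)" by (rule sum_abs)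
  also have "\<dots> \<le> (\<Sum>j<n. M $$ (i,j) * \<bar>v $ i\<bar>)"
    using nn i imax by (intro sum_mono) (auto simp: abs_mult intro: mult_left_mono)
  also have "\<dots> = (\<Sum>j<n. M $$ (i,j)) * \<bar>v $ i\<bar>" by (simp add: sum_distrib_right)
  finally have "\<bar>k\<bar> \<le> (\<Sum>j<n. M $$ (i,j))" using vpos by simp
  thus ?thesis using i by (intro exI[of _ i]) auto
qed

lemma lambda1_bounds:
  fixes M :: "real mat"
  assumes M: "M \<in> carrier_mat n n" and sym: "\<And>i j. i < n \<Longrightarrow> j < n \<Longrightarrow> M $$ (i,j) = M $$ (j,i)"
    and nn: "\<And>i j. i < n \<Longrightarrow> j < n \<Longrightarrow> M $$ (i,j) \<ge> 0" and n: "n > 0"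
  shows "(\<Sum>i<n. \<Sum>j<n. M $$ (i,j)) / n \<le> lambda1 M" "\<exists>i<n. lambda1 M \<le> (\<Sum>j<n. M $$ (i,j))"
proof -
  have cp: "char_poly M \<noteq> 0" using degree_monic_char_poly[OF M] by auto
  have "{k. eigenvalue M k} = {k. poly (char_poly M) k = 0}"
    using eigenvalue_root_char_poly[OF M] by auto
  hence fin: "finite {k. eigenvalue M k}" using poly_roots_finite[OF cp] by simp
  obtain k0 where k0: "eigenvalue M k0" "(\<Sum>i<n. \<Sum>j<n. M $$ (i,j)) / n \<le> k0"
    using max_eig[OF M sym n] by blast
  have ne: "{k. eigenvalue M k} \<noteq> {}" using k0 by auto
  show "(\<Sum>i<n. \<Sum>j<n. M $$ (i,j)) / n \<le> lambda1 M"
    unfolding lambda1_def using Max_ge[OF fin, of k0] k0 by auto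
  have "eigenvalue M (lambda1 M)" unfolding lambda1_def using Max_in[OF fin ne] by simp
  thus "\<exists>i<n. lambda1 M \<le> (\<Sum>j<n. M $$ (i,j))" using eig_upper[OF M, of "lambda1 M"] nn by blast
qed



definition ent :: "(nat \<times> nat \<Rightarrow> bool) \<Rightarrow> nat \<Rightarrow> nat \<Rightarrow> real" where
  "ent f i j = (if f (min i j, max i j) then 1 else 0)"
definition deg :: "nat \<Rightarrow> (nat \<times> nat \<Rightarrow> bool) \<Rightarrow> nat \<Rightarrow> real" where
  "deg n f i = (\<Sum>j<n. ent f i j)"
definition Idx :: "nat \<Rightarrow> (nat \<times> nat) set" where
  "Idx n = {(i,j). i \<le> j \<and> j < n}"

lemma finite_Idx: "finite (Idx n)"
  by (rule finite_subset[of _ "{..<n} \<times> {..<n}"]) (auto simp: Idx_def)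

lemma entries_pmf_alt: "entries_pmf n p = Pi_pmf (Idx n) False (\<lambda>_. bernoulli_pmf p)"
  unfolding entries_pmf_def Idx_def by simp

lemma finite_set_entries: "finite (set_pmf (entries_pmf n p))"
proof -
  have "set_pmf (entries_pmf n p) \<subseteq> {f. \<forall>x. x \<notin> Idx n \<longrightarrow> f x = False}"
    unfolding entries_pmf_alt by (rule set_Pi_pmf_subset[OF finite_Idx])
  also have "\<dots> \<subseteq> (\<lambda>S x. x \<in> S) ` Pow (Idx n)"
  proof
    fix f assume f: "f \<in> {f. \<forall>x. x \<notin> Idx n \<longrightarrow> f x = False}"
    have "f = (\<lambda>x. x \<in> {x \<in> Idx n. f x})" using f by (auto simp: fun_eq_iff)
    thus "f \<in> (\<lambda>S x. x \<in> S) ` Pow (Idx n)" by blast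
  qed
  finally show ?thesis by (rule finite_subset) (simp add: finite_Idx)
qed

lemma integrable_entries[simp, intro]:
  "integrable (measure_pmf (entries_pmf n p)) (g :: _ \<Rightarrow> real)"
  by (rule integrable_measure_pmf_finite[OF finite_set_entries])

lemma exp_quad:
  fixes x :: real
  assumes "\<bar>x\<bar> \<le> 1"
  shows "exp x \<le> 1 + x + x^2"
proof (cases "x \<ge> 0")
  case True thus ?thesis using exp_bound[of x] assms by simp
next
  case False
  define s where "s = -x"
  have s: "s > 0" "s \<le> 1" using False assms unfolding s_def by auto
  have "exp x = 1 / exp s" unfolding s_def by (simp add: exp_minus field_simps)
  also have "\<dots> \<le> 1 / (1 + s)"
    using s by (intro divide_left_mono) (auto simp: add_pos_pos)
  also have "\<dots> \<le> 1 - s + s^2"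
  proof -
    have "(1 - s + s^2) * (1 + s) = 1 + s^3" by (simp add: algebra_simps power2_eq_square power3_eq_cube)
    also have "\<dots> \<ge> 1" using s by simp
    finally show ?thesis using s by (simp add: divide_le_eq)
  qed
  finally show ?thesis unfolding s_def by simp
qed

lemma bern_mgf:
  fixes p t :: real
  assumes p: "0 \<le> p" "p \<le> 1" and t: "\<bar>t\<bar> \<le> 1"
  shows "p * exp (t * (1 - p)) + (1 - p) * exp (t * (0 - p)) \<le> exp (t^2 * p)"
proof -
  have a1: "\<bar>t * (1 - p)\<bar> \<le> 1" using p t by (simp add: abs_mult mult_le_one)
  have a2: "\<bar>t * (0 - p)\<bar> \<le> 1" using p t by (simp add: abs_mult mult_le_one)
  have "p * exp (t * (1 - p)) + (1 - p) * exp (t * (0 - p))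
     \<le> p * (1 + t * (1 - p) + (t * (1 - p))^2) + (1 - p) * (1 + t * (0 - p) + (t * (0 - p))^2)"
    using p by (intro add_mono mult_left_mono exp_quad a1 a2) auto
  also have "\<dots> = 1 + t^2 * (p * (1 - p))" by (simp add: algebra_simps power2_eq_square)
  also have "\<dots> \<le> 1 + t^2 * p"
  proof -
    have "p * (1 - p) \<le> p" using mult_nonneg_nonneg[of p p] p by (simp add: right_diff_distrib)
    thus ?thesis by (intro add_left_mono mult_left_mono) auto
  qed
  also have "\<dots> \<le> exp (t^2 * p)" by simp
  finally show ?thesis .
qed

lemma mgf_deg:
  assumes i: "i < n" and p: "0 \<le> p" "p \<le> 1" and t: "\<bar>t\<bar> \<le> 1"
  shows "measure_pmf.expectation (entries_pmf n p) (\<lambda>f. exp (t * (deg n f i - n * p))) \<le> exp (n * p * t^2)"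
proof -
  define \<sigma> where "\<sigma> = (\<lambda>j::nat. (min i j, max i j))"
  have inj: "inj_on \<sigma> {..<n}"
    unfolding inj_on_def \<sigma>_def by (auto simp: min_def max_def split: if_splits)
  have sub: "\<sigma> ` {..<n} \<subseteq> Idx n" using i unfolding \<sigma>_def Idx_def by auto
  define g where "g = (\<lambda>e b. if e \<in> \<sigma> ` {..<n} then exp (t * ((if b then 1 else 0) - p)) else (1::real))"
  have eq: "exp (t * (deg n f i - n * p)) = (\<Prod>e\<in>Idx n. g e (f e))" for f
  proof -
    have "t * (deg n f i - n * p) = (\<Sum>j<n. t * (ent f i j - p))"
    proof -
      have "(\<Sum>j<n. t * (ent f i j - p)) = t * (\<Sum>j<n. (ent f i j - p))" by (rule sum_distrib_left[symmetric])
      also have "\<dots> = t * (deg n f i - n * p)" unfolding deg_def by (simp add: sum_subtractf)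
      finally show ?thesis by simp
    qed
    hence "exp (t * (deg n f i - n * p)) = (\<Prod>j<n. exp (t * (ent f i j - p)))"
      by (simp add: exp_sum)
    also have "\<dots> = (\<Prod>e\<in>\<sigma> ` {..<n}. exp (t * ((if f e then 1 else 0) - p)))"
      by (subst prod.reindex[OF inj]) (simp add: \<sigma>_def ent_def)
    also have "\<dots> = (\<Prod>e\<in>\<sigma> ` {..<n}. g e (f e))" by (intro prod.cong) (auto simp: g_def)
    also have "\<dots> = (\<Prod>e\<in>Idx n. g e (f e))"
      by (rule prod.mono_neutral_right[symmetric, OF finite_Idx sub]) (auto simp: g_def)
    finally show ?thesis .
  qed
  define B where "B = p * exp (t * (1 - p)) + (1 - p) * exp (t * (0 - p))"
  have "measure_pmf.expectation (entries_pmf n p) (\<lambda>f. exp (t * (deg n f i - n * p)))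
      = measure_pmf.expectation (Pi_pmf (Idx n) False (\<lambda>_. bernoulli_pmf p)) (\<lambda>f. \<Prod>e\<in>Idx n. g e (f e))"
    unfolding entries_pmf_alt eq ..
  also have "\<dots> = (\<Prod>e\<in>Idx n. measure_pmf.expectation (bernoulli_pmf p) (g e))"
    by (rule expectation_prod_Pi_pmf[OF finite_Idx])
       (auto simp: g_def intro!: integrable_measure_pmf_finite)
  also have "\<dots> = (\<Prod>e\<in>\<sigma> ` {..<n}. measure_pmf.expectation (bernoulli_pmf p) (g e))"
    by (rule prod.mono_neutral_right[OF finite_Idx sub]) (use p in \<open>auto simp: g_def\<close>)
  also have "\<dots> = (\<Prod>e\<in>\<sigma> ` {..<n}. B)"
    by (intro prod.cong refl) (use p in \<open>auto simp: g_def B_def\<close>)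
  also have "\<dots> = B ^ n" using card_image[OF inj] by simp
  also have "\<dots> \<le> exp (t^2 * p) ^ n"
    unfolding B_def by (intro power_mono bern_mgf p t) (use p in \<open>auto intro!: add_nonneg_nonneg\<close>)
  also have "\<dots> = exp (n * p * t^2)" by (simp add: exp_of_nat_mult[symmetric] algebra_simps)
  finally show ?thesis .
qed

lemma pow_le_exp:
  fixes y :: real
  assumes "0 \<le> y"
  shows "y^k / fact k \<le> exp y"
proof -
  have s: "(\<lambda>n. y^n /\<^sub>R fact n) sums exp y" by (rule exp_converges)
  have "(\<Sum>n\<in>{k}. y^n /\<^sub>R fact n) \<le> (\<Sum>n. y^n /\<^sub>R fact n)"
    by (rule sum_le_suminf) (use s assms in \<open>auto simp: sums_iff\<close>)
  thus ?thesis using sums_unique[OF s] by (simp add: divide_inverse mult.commute)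
qed

lemma even_pow_bound:
  fixes X t :: real
  assumes t: "t > 0"
  shows "X^(2*m) \<le> fact (2*m) / t^(2*m) * (exp (t*X) + exp (-t*X))"
proof -
  define y where "y = t * \<bar>X\<bar>"
  have y0: "y \<ge> 0" unfolding y_def using t by simp
  have "exp y \<le> exp (t*X) + exp (-t*X)"
    unfolding y_def using t by (cases "X \<ge> 0") (auto simp: abs_if add_pos_pos)
  moreover have "y^(2*m) \<le> fact (2*m) * exp y"
    using pow_le_exp[OF y0, of "2*m"] by (simp add: divide_le_eq mult.commute)
  ultimately have "y^(2*m) \<le> fact (2*m) * (exp (t*X) + exp (-t*X))"
    by (meson fact_ge_zero mult_left_mono order_trans)
  moreover have "y^(2*m) = t^(2*m) * X^(2*m)"
    unfolding y_def power_mult_distrib by (simp add: power_even_abs)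
  ultimately have "t^(2*m) * X^(2*m) \<le> fact (2*m) * (exp (t*X) + exp (-t*X))" by simp
  thus ?thesis using t by (simp add: field_simps)
qed

lemma moment_deg:
  assumes i: "i < n" and p: "0 \<le> p" "p \<le> 1" and mu: "n * p \<ge> 1"
  shows "measure_pmf.expectation (entries_pmf n p) (\<lambda>f. (deg n f i - n * p)^(2*m))
          \<le> 2 * exp 1 * fact (2*m) * (n * p)^m"
proof -
  define \<mu> where "\<mu> = n * p"
  have \<mu>1: "\<mu> \<ge> 1" using mu unfolding \<mu>_def by simp
  define t where "t = 1 / sqrt \<mu>"
  have t0: "t > 0" unfolding t_def using \<mu>1 by simp
  have t1: "\<bar>t\<bar> \<le> 1" unfolding t_def using \<mu>1 by (simp add: divide_le_eq)
  have t1': "\<bar>-t\<bar> \<le> 1" using t1 by simp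
  have tt: "\<mu> * t^2 = 1" unfolding t_def using \<mu>1 by (simp add: power_divide)
  let ?E = "measure_pmf.expectation (entries_pmf n p)"
  define K where "K = fact (2*m) / t^(2*m)"
  have "?E (\<lambda>f. (deg n f i - n * p)^(2*m))
      \<le> ?E (\<lambda>f. K * (exp (t * (deg n f i - n * p)) + exp (-t * (deg n f i - n * p))))"
    unfolding K_def by (intro integral_mono integrable_entries even_pow_bound t0)
  also have "\<dots> = K * (?E (\<lambda>f. exp (t * (deg n f i - n * p))) + ?E (\<lambda>f. exp (-t * (deg n f i - n * p))))"
    by simp
  also have "\<dots> \<le> K * (exp (n * p * t^2) + exp (n * p * (-t)^2))"
    unfolding K_def using t0
    by (intro mult_left_mono add_mono mgf_deg i p t1 t1') auto
  also have "\<dots> = K * (2 * exp 1)" using tt unfolding \<mu>_def by simp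
  also have "K = fact (2*m) * \<mu>^m"
  proof -
    have "t^(2*m) = (t^2)^m" by (simp add: power_mult)
    also have "t^2 = 1 / \<mu>" using tt \<mu>1 by (simp add: field_simps)
    finally have "t^(2*m) = 1 / \<mu>^m" by (simp add: power_divide)
    thus ?thesis unfolding K_def by simp
  qed
  finally show ?thesis unfolding \<mu>_def by (simp add: algebra_simps)
qed

lemma E_ent:
  assumes i: "i < n" and j: "j < n" and p: "0 \<le> p" "p \<le> 1"
  shows "measure_pmf.expectation (entries_pmf n p) (\<lambda>f. ent f i j) = p"
proof -
  define e where "e = (min i j, max i j)"
  have e: "e \<in> Idx n" unfolding e_def Idx_def using i j by auto
  have "measure_pmf.expectation (entries_pmf n p) (\<lambda>f. ent f i j)
     = measure_pmf.expectation (map_pmf (\<lambda>f. f e) (entries_pmf n p)) (\<lambda>b. if b then 1 else 0)"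
    by (simp add: ent_def e_def)
  also have "map_pmf (\<lambda>f. f e) (entries_pmf n p) = bernoulli_pmf p"
    unfolding entries_pmf_alt using Pi_pmf_component[OF finite_Idx, where x=e and dflt=False and p="\<lambda>_. bernoulli_pmf p"] e by simp
  finally show ?thesis using p by simp
qed

lemma E_deg:
  assumes i: "i < n" and p: "0 \<le> p" "p \<le> 1"
  shows "measure_pmf.expectation (entries_pmf n p) (\<lambda>f. deg n f i) = n * p"
proof -
  have "measure_pmf.expectation (entries_pmf n p) (\<lambda>f. deg n f i)
      = (\<Sum>j<n. measure_pmf.expectation (entries_pmf n p) (\<lambda>f. ent f i j))"
    unfolding deg_def by (rule Bochner_Integration.integral_sum) auto
  also have "\<dots> = (\<Sum>j<n. p)" using E_ent[OF i _ p] by simp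
  finally show ?thesis by simp
qed



lemma sbm_carrier: "sym_bern_mat n f \<in> carrier_mat n n"
  unfolding sym_bern_mat_def by simp

lemma sbm_entry: "i < n \<Longrightarrow> j < n \<Longrightarrow> sym_bern_mat n f $$ (i,j) = ent f i j"
  unfolding sym_bern_mat_def ent_def by simp

lemma lam_bounds:
  assumes n: "n > 0"
  shows "(\<Sum>i<n. deg n f i) / n \<le> lambda1 (sym_bern_mat n f)"
        "\<exists>i<n. lambda1 (sym_bern_mat n f) \<le> deg n f i"
proof -
  have sym: "sym_bern_mat n f $$ (i,j) = sym_bern_mat n f $$ (j,i)" if "i < n" "j < n" for i j
    using that by (simp add: sbm_entry ent_def min.commute max.commute)
  have nn: "sym_bern_mat n f $$ (i,j) \<ge> 0" if "i < n" "j < n" for i j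
    using that by (simp add: sbm_entry ent_def)
  have rs: "(\<Sum>j<n. sym_bern_mat n f $$ (i,j)) = deg n f i" if "i < n" for i
    unfolding deg_def using that by (intro sum.cong) (auto simp: sbm_entry)
  note b = lambda1_bounds[OF sbm_carrier sym nn n]
  have "(\<Sum>i<n. \<Sum>j<n. sym_bern_mat n f $$ (i,j)) = (\<Sum>i<n. deg n f i)"
    using rs by (intro sum.cong) auto
  thus "(\<Sum>i<n. deg n f i) / n \<le> lambda1 (sym_bern_mat n f)" using b(1) by simp
  show "\<exists>i<n. lambda1 (sym_bern_mat n f) \<le> deg n f i" using b(2) rs by auto
qed

lemma dev_real:
  fixes d :: "nat \<Rightarrow> real"
  assumes n: "n > 0" and lo: "(\<Sum>i<n. d i) / n \<le> lam" and hi: "j < n" "lam \<le> d j"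
  shows "(lam - \<mu>)^(2*m) \<le> (\<Sum>i<n. (d i - \<mu>)^(2*m))"
proof -
  have "\<exists>i<n. \<bar>lam - \<mu>\<bar> \<le> \<bar>d i - \<mu>\<bar>"
  proof (cases "lam \<ge> \<mu>")
    case True thus ?thesis using hi by (intro exI[of _ j]) auto
  next
    case False
    define S where "S = d ` {..<n}"
    have fS: "finite S" "S \<noteq> {}" unfolding S_def using n by auto
    obtain i where i: "i < n" "d i = Min S" using Min_in[OF fS] unfolding S_def by auto
    have imin: "d i \<le> d k" if "k < n" for k
      using Min_le[OF fS(1), of "d k"] that i unfolding S_def by auto
    have "(\<Sum>k<n. d i) \<le> (\<Sum>k<n. d k)" using imin by (intro sum_mono) auto
    hence "n * d i \<le> (\<Sum>k<n. d k)" by simp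
    hence "d i \<le> (\<Sum>k<n. d k) / n" using n by (simp add: le_divide_eq mult.commute)
    hence "d i \<le> lam" using lo by simp
    thus ?thesis using False i by (intro exI[of _ i]) auto
  qed
  then obtain i where i: "i < n" "\<bar>lam - \<mu>\<bar> \<le> \<bar>d i - \<mu>\<bar>" by blast
  have "(lam - \<mu>)^(2*m) = \<bar>lam - \<mu>\<bar>^(2*m)" by (simp add: power_even_abs)
  also have "\<dots> \<le> \<bar>d i - \<mu>\<bar>^(2*m)" using i by (intro power_mono) auto
  also have "\<dots> = (d i - \<mu>)^(2*m)" by (simp add: power_even_abs)
  also have "\<dots> \<le> (\<Sum>i<n. (d i - \<mu>)^(2*m))"
    using i by (intro member_le_sum) (auto simp: zero_le_even_power)
  finally show ?thesis .
qed

lemma pow_diff_le: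
  fixes a b :: real
  shows "(a - b)^(2*m) \<le> 2^(2*m) * (a^(2*m) + b^(2*m))"
proof -
  have "\<bar>a - b\<bar> \<le> 2 * max \<bar>a\<bar> \<bar>b\<bar>" by auto
  hence "\<bar>a - b\<bar>^(2*m) \<le> (2 * max \<bar>a\<bar> \<bar>b\<bar>)^(2*m)" by (intro power_mono) auto
  also have "\<dots> = 2^(2*m) * (max \<bar>a\<bar> \<bar>b\<bar>)^(2*m)" by (simp add: power_mult_distrib)
  also have "(max \<bar>a\<bar> \<bar>b\<bar>)^(2*m) \<le> \<bar>a\<bar>^(2*m) + \<bar>b\<bar>^(2*m)"
    by (cases "\<bar>a\<bar> \<le> \<bar>b\<bar>") (auto simp: max_def)
  finally show ?thesis by (simp add: power_even_abs mult_left_mono)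
qed

lemma main_bound:
  assumes n: "n > 0" and p: "0 \<le> P" "P \<le> 1" and mu: "n * P \<ge> 1"
  shows "measure_pmf.expectation (entries_pmf n P)
           (\<lambda>f. (lambda1 (sym_bern_mat n f) / E_lambda1 n P - 1)^(2*M))
         \<le> 4 * exp 1 * n * (16 * (real M)^2 / (n*P))^M"
proof -
  let ?E = "measure_pmf.expectation (entries_pmf n P)"
  define lam where "lam = (\<lambda>f. lambda1 (sym_bern_mat n f))"
  define L where "L = E_lambda1 n P"
  define \<mu> where "\<mu> = n * P"
  have L: "L = ?E lam" unfolding L_def E_lambda1_def lam_def ..
  have \<mu>1: "\<mu> \<ge> 1" using mu unfolding \<mu>_def by simp
  have EZ: "?E (\<lambda>f. (lam f - \<mu>)^(2*M)) \<le> n * (2 * exp 1 * fact (2*M) * \<mu>^M)"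
  proof -
    have "?E (\<lambda>f. (lam f - \<mu>)^(2*M)) \<le> ?E (\<lambda>f. \<Sum>i<n. (deg n f i - \<mu>)^(2*M))"
    proof (intro integral_mono integrable_entries)
      fix f
      obtain j where "j < n" "lam f \<le> deg n f j" using lam_bounds(2)[OF n, of f] unfolding lam_def by blast
      thus "(lam f - \<mu>)^(2*M) \<le> (\<Sum>i<n. (deg n f i - \<mu>)^(2*M))"
        using dev_real[OF n lam_bounds(1)[OF n, of f]] unfolding lam_def by blast
    qed
    also have "\<dots> = (\<Sum>i<n. ?E (\<lambda>f. (deg n f i - \<mu>)^(2*M)))"
      by (rule Bochner_Integration.integral_sum) auto
    also have "\<dots> \<le> (\<Sum>i<n. 2 * exp 1 * fact (2*M) * \<mu>^M)"
      by (intro sum_mono) (unfold \<mu>_def, rule moment_deg, use p mu in auto)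
    also have "\<dots> = n * (2 * exp 1 * fact (2*M) * \<mu>^M)" by simp
    finally show ?thesis .
  qed
  have L\<mu>: "\<mu> \<le> L"
  proof -
    have "?E (\<lambda>f. (\<Sum>i<n. deg n f i) / n) \<le> ?E lam"
      by (intro integral_mono integrable_entries) (unfold lam_def, rule lam_bounds(1)[OF n])
    moreover have "?E (\<lambda>f. (\<Sum>i<n. deg n f i) / n) = (\<Sum>i<n. ?E (\<lambda>f. deg n f i)) / n"
      by (subst integral_divide_zero, subst Bochner_Integration.integral_sum) auto
    moreover have "(\<Sum>i<n. ?E (\<lambda>f. deg n f i)) = (\<Sum>i<n. n * P)"
      using E_deg[OF _ p] by simp
    ultimately show ?thesis unfolding L \<mu>_def using n by simp
  qed
  have Lpos: "L > 0" using L\<mu> \<mu>1 by simp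
  have jen: "(L - \<mu>)^(2*M) \<le> ?E (\<lambda>f. (lam f - \<mu>)^(2*M))"
  proof -
    have "?E (\<lambda>f. lam f - \<mu>) = L - \<mu>" unfolding L by (subst Bochner_Integration.integral_diff) auto
    moreover have "(\<lambda>x. x^(2*M)) (?E (\<lambda>f. lam f - \<mu>)) \<le> ?E (\<lambda>f. (\<lambda>x. x^(2*M)) (lam f - \<mu>))"
      by (rule measure_pmf.jensens_inequality[where I=UNIV]) (auto intro: convex_power_even)
    ultimately show ?thesis by simp
  qed
  have D: "?E (\<lambda>f. (lam f - L)^(2*M)) \<le> 2^(2*M) * 2 * ?E (\<lambda>f. (lam f - \<mu>)^(2*M))"
  proof -
    have "?E (\<lambda>f. (lam f - L)^(2*M)) \<le> ?E (\<lambda>f. 2^(2*M) * ((lam f - \<mu>)^(2*M) + (L - \<mu>)^(2*M)))"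
    proof (intro integral_mono integrable_entries)
      fix f show "(lam f - L)^(2*M) \<le> 2^(2*M) * ((lam f - \<mu>)^(2*M) + (L - \<mu>)^(2*M))"
        using pow_diff_le[of "lam f - \<mu>" "L - \<mu>" M] by simp
    qed
    also have "\<dots> = 2^(2*M) * (?E (\<lambda>f. (lam f - \<mu>)^(2*M)) + (L - \<mu>)^(2*M))"
      by simp
    also have "\<dots> \<le> 2^(2*M) * (?E (\<lambda>f. (lam f - \<mu>)^(2*M)) + ?E (\<lambda>f. (lam f - \<mu>)^(2*M)))"
      using jen by (intro mult_left_mono add_left_mono) auto
    finally show ?thesis by simp
  qed
  have eq: "?E (\<lambda>f. (lam f / L - 1)^(2*M)) = ?E (\<lambda>f. (lam f - L)^(2*M)) / L^(2*M)"
  proof -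
    have "(\<lambda>f. (lam f / L - 1)^(2*M)) = (\<lambda>f. (lam f - L)^(2*M) / L^(2*M))"
    proof
      fix f
      have "lam f / L - 1 = (lam f - L) / L" using Lpos by (simp add: field_simps)
      thus "(lam f / L - 1)^(2*M) = (lam f - L)^(2*M) / L^(2*M)" by (simp add: power_divide)
    qed
    thus ?thesis by simp
  qed
  have F: "2^(2*M) * fact (2*M) \<le> (16 * (real M)^2)^M"
  proof -
    have "fact (2*M) \<le> (real (2*M))^(2*M)" using fact_le_power[of "2*M", where 'a=real] by simp
    hence "2^(2*M) * fact (2*M) \<le> 2^(2*M) * (real (2*M))^(2*M)" by (intro mult_left_mono) auto
    also have "\<dots> = ((2 * real (2*M))^2)^M" by (simp only: power_mult_distrib[symmetric] power_mult)
    also have "(2 * real (2*M))^2 = 16 * (real M)^2" by (simp add: power2_eq_square)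
    finally show ?thesis .
  qed
  have "?E (\<lambda>f. (lam f / L - 1)^(2*M)) \<le> 2^(2*M) * 2 * (n * (2 * exp 1 * fact (2*M) * \<mu>^M)) / L^(2*M)"
  proof -
    have "2^(2*M) * 2 * ?E (\<lambda>f. (lam f - \<mu>)^(2*M)) \<le> 2^(2*M) * 2 * (n * (2 * exp 1 * fact (2*M) * \<mu>^M))"
      using EZ by (intro mult_left_mono) auto
    hence "?E (\<lambda>f. (lam f - L)^(2*M)) \<le> 2^(2*M) * 2 * (n * (2 * exp 1 * fact (2*M) * \<mu>^M))"
      using D by linarith
    thus ?thesis unfolding eq using Lpos by (intro divide_right_mono) auto
  qed
  also have "\<dots> \<le> 2^(2*M) * 2 * (n * (2 * exp 1 * fact (2*M) * \<mu>^M)) / \<mu>^(2*M)"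
    using L\<mu> \<mu>1 by (intro divide_left_mono power_mono mult_pos_pos) auto
  also have "\<dots> = 4 * exp 1 * n * (2^(2*M) * fact (2*M)) / \<mu>^M"
    using \<mu>1 by (simp add: power_mult power2_eq_square power_mult_distrib field_simps)
  also have "\<dots> \<le> 4 * exp 1 * n * (16 * (real M)^2)^M / \<mu>^M"
    using \<mu>1 F by (intro divide_right_mono mult_left_mono) auto
  also have "\<dots> = 4 * exp 1 * n * (16 * (real M)^2 / (n*P))^M"
    unfolding \<mu>_def by (simp add: power_divide)
  finally show ?thesis unfolding lam_def L_def .
qed

lemma per_n:
  fixes w P :: real and M K :: nat
  assumes n: "n > 0" and w: "0 < w" "w < 1" and K: "K = nat \<lceil>4 / w\<rceil>"
    and h1: "real n powr (w - 1) \<le> P" "P \<le> 1/2"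
    and h2: "K \<le> M" "real M \<le> 1/4 * min (real n powr (w/4)) (sqrt (P * real n powr (1 - w)))"
  shows "0 \<le> (real n)^2 * P * measure_pmf.expectation (entries_pmf n P)
            (\<lambda>f. (lambda1 (sym_bern_mat n f) / E_lambda1 n P - 1) ^ (2 * M))"
        "(real n)^2 * P * measure_pmf.expectation (entries_pmf n P)
            (\<lambda>f. (lambda1 (sym_bern_mat n f) / E_lambda1 n P - 1) ^ (2 * M))
          \<le> 4 * exp 1 * inverse (real n)"
proof -
  let ?E = "measure_pmf.expectation (entries_pmf n P)
            (\<lambda>f. (lambda1 (sym_bern_mat n f) / E_lambda1 n P - 1) ^ (2 * M))"
  have n1: "real n \<ge> 1" using n by simp
  have Ppos: "P > 0" using h1(1) n by (smt (verit) powr_gt_zero of_nat_0_less_iff)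
  have E0: "?E \<ge> 0" by (intro Bochner_Integration.integral_nonneg) (simp add: zero_le_even_power)
  show "0 \<le> (real n)^2 * P * ?E" using Ppos E0 by simp
  define \<mu> where "\<mu> = n * P"
  have pw: "real n powr w = real n * real n powr (w - 1)"
    using powr_add[of "real n" 1 "w - 1"] n by simp
  have "real n powr w \<ge> 1" using n1 w by (intro ge_one_powr_ge_zero) auto
  hence \<mu>1: "\<mu> \<ge> 1" unfolding \<mu>_def using pw h1(1) n1
    by (smt (verit) mult_left_mono of_nat_0_le_iff)
  have mb: "?E \<le> 4 * exp 1 * n * (16 * (real M)^2 / (n*P))^M"
    by (rule main_bound) (use n Ppos h1 \<mu>1 in \<open>auto simp: \<mu>_def\<close>)
  have pw2: "P * real n powr (1 - w) = \<mu> * real n powr (-w)"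
    unfolding \<mu>_def using powr_add[of "real n" 1 "-w"] n by simp
  have sq: "16 * (real M)^2 \<le> P * real n powr (1 - w)"
  proof -
    have "4 * real M \<le> sqrt (P * real n powr (1 - w))" using h2(2) by simp
    hence "(4 * real M)^2 \<le> (sqrt (P * real n powr (1 - w)))^2" by (intro power_mono) auto
    thus ?thesis using Ppos by (simp add: power_mult_distrib)
  qed
  define r where "r = 16 * (real M)^2 / (n*P)"
  have r0: "r \<ge> 0" unfolding r_def using Ppos by simp
  have rle: "r \<le> real n powr (-w)"
    unfolding r_def using sq pw2 \<mu>1 unfolding \<mu>_def by (simp add: divide_le_eq mult.commute)
  have q1: "real n powr (-w) \<le> 1" using n1 w by (simp add: powr_minus inverse_le_1_iff ge_one_powr_ge_zero)
  have "r^M \<le> (real n powr (-w))^M" using r0 rle by (intro power_mono)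
  also have "\<dots> \<le> (real n powr (-w))^K" using q1 h2(1) by (intro power_decreasing) auto
  also have "\<dots> = real n powr (real K * (-w))" using n by (simp add: powr_power)
  also have "\<dots> \<le> real n powr (-4)"
  proof (intro powr_mono n1)
    have "4 / w \<le> real K" unfolding K by linarith
    hence "4 \<le> real K * w" using w by (simp add: divide_le_eq)
    thus "real K * - w \<le> - 4" by simp
  qed
  also have "\<dots> = inverse ((real n)^4)" using n by (simp add: powr_minus powr_realpow)
  finally have rM: "r^M \<le> inverse ((real n)^4)" .
  have "(real n)^2 * P \<le> (real n)^2" using h1 by (simp add: mult_left_le)
  hence "(real n)^2 * P * ?E \<le> (real n)^2 * ?E"
    using E0 by (intro mult_right_mono) auto
  also have "\<dots> \<le> (real n)^2 * (4 * exp 1 * n * r^M)"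
    using mb unfolding r_def by (intro mult_left_mono) auto
  also have "\<dots> \<le> (real n)^2 * (4 * exp 1 * n * inverse ((real n)^4))"
    using rM by (intro mult_left_mono) auto
  also have "\<dots> = 4 * exp 1 * inverse (real n)"
    using n by (simp add: field_simps power2_eq_square power4_eq_xxxx)
  finally show "(real n)^2 * P * ?E \<le> 4 * exp 1 * inverse (real n)" .
qed

theorem lemma4:
  "\<exists>c::real. c > 0 \<and> (\<exists>mw :: real \<Rightarrow> nat.
     \<forall>w p m. 0 < w \<and> w < 1 \<longrightarrow>
       (\<forall>\<^sub>F n in sequentially. real n powr (w - 1) \<le> p n \<and> p n \<le> 1/2) \<longrightarrow>
       (\<forall>\<^sub>F n in sequentially. mw w \<le> m n \<and>
            real (m n) \<le> c * min (real n powr (w/4)) (sqrt (p n * real n powr (1 - w)))) \<longrightarrow>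
       ((\<lambda>n. (real n)^2 * p n *
          measure_pmf.expectation (entries_pmf n (p n))
            (\<lambda>f. (lambda1 (sym_bern_mat n f) / E_lambda1 n (p n) - 1) ^ (2 * m n)))
        \<longlonglongrightarrow> 0))"
proof (intro exI[of _ "1/4::real"] conjI exI[of _ "\<lambda>w. nat \<lceil>4 / w\<rceil>"] allI impI)
  show "(1/4::real) > 0" by simp
  fix w :: real and p :: "nat \<Rightarrow> real" and m :: "nat \<Rightarrow> nat"
  assume w: "0 < w \<and> w < 1"
    and H1: "\<forall>\<^sub>F n in sequentially. real n powr (w - 1) \<le> p n \<and> p n \<le> 1/2"
    and H2: "\<forall>\<^sub>F n in sequentially. nat \<lceil>4 / w\<rceil> \<le> m n \<and>
            real (m n) \<le> 1/4 * min (real n powr (w/4)) (sqrt (p n * real n powr (1 - w)))"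
  define Q where "Q = (\<lambda>n. (real n)^2 * p n *
          measure_pmf.expectation (entries_pmf n (p n))
            (\<lambda>f. (lambda1 (sym_bern_mat n f) / E_lambda1 n (p n) - 1) ^ (2 * m n)))"
  have ev: "\<forall>\<^sub>F n in sequentially. 0 \<le> Q n \<and> Q n \<le> 4 * exp 1 * inverse (real n)"
    using H1 H2 eventually_gt_at_top[of "0::nat"]
  proof eventually_elim
    case (elim n)
    show ?case unfolding Q_def
      using per_n[OF elim(3) _ _ refl, of w "p n" "m n"] w elim(1,2) by auto
  qed
  have lim: "(\<lambda>n. 4 * exp 1 * inverse (real n)) \<longlonglongrightarrow> 0"
    using tendsto_mult[OF tendsto_const lim_inverse_n, of "4 * exp 1"] by simp
  have "Q \<longlonglongrightarrow> 0"
    by (rule tendsto_sandwich[OF _ _ tendsto_const lim]) (use ev in \<open>auto elim: eventually_mono\<close>)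
  thus "(\<lambda>n. (real n)^2 * p n *
          measure_pmf.expectation (entries_pmf n (p n))
            (\<lambda>f. (lambda1 (sym_bern_mat n f) / E_lambda1 n (p n) - 1) ^ (2 * m n)))
        \<longlonglongrightarrow> 0" unfolding Q_def .
qed

end
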